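(* Let $n\geq 1$ be an integer and $p$ a prime number. Let $\phi(x)\in \mathbb{Z}[x]$ be a monic polynomial which is irreducible modulo $p$. Let $a_0(x), a_1(x), \dots, a_{n-1}(x)\in \mathbb{Z}[x]$ each have degree less than $\deg \phi(x)$. Let $a_n$ be an integer with $p\nmid a_n$, and let $b_0, b_1, \dots, b_{n-1}$ be integers with $p\mid b_j$ for each $0\leq j\leq n-1$. Then the polynomial $$F(x)= a_{n}\phi(x)^{2n}+\sum_{j=0}^{n-1}b_j a_j(x)\phi(x)^{2j}$$ has no non-constant factor (in $\mathbb{Z}[x]$) of degree less than $\deg \phi(x)$.
   Context: A polynomial in $\mathbb{Z}[x]$ is irreducible modulo a prime $p$ if its reduction modulo $p$ is irreducible in $(\mathbb{Z}/p\mathbb{Z})[x]$. *)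

theory Defs
  imports "Berlekamp_Zassenhaus.Finite_Field" "HOL-Computational_Algebra.Polynomial"
begin

text \<open>Reduction modulo p of an integer polynomial, where p = CARD('p) and
  'p mod_ring is the field Z/pZ.\<close>
definition reduce_mod :: "int poly \<Rightarrow> 'p::prime_card mod_ring poly" where
  "reduce_mod f = map_poly of_int f"

definition irreducible_mod :: "'p::prime_card itself \<Rightarrow> int poly \<Rightarrow> bool" where
  "irreducible_mod _ f \<longleftrightarrow> irreducible (reduce_mod f :: 'p mod_ring poly)"

end

theory Submission
  imports Defs
begin

lemma of_int_mod_ring_0_iff:
  "((of_int x :: 'a :: nontriv mod_ring) = 0) \<longleftrightarrow> int CARD('a) dvd x"
  unfolding of_int_of_int_mod_ring by transfer (simp add: mod_eq_0_iff_dvd)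

lemma degree_F_le:
  fixes n :: nat and phi :: "int poly" and a :: "nat \<Rightarrow> int poly"
    and an :: int and b :: "nat \<Rightarrow> int"
  assumes "\<And>j. j < n \<Longrightarrow> degree (a j) < degree phi"
  shows "degree (smult an (phi ^ (2 * n)) + (\<Sum>j<n. smult (b j) (a j * phi ^ (2 * j))))
     \<le> 2 * n * degree phi"
proof -
  have "degree (smult an (phi ^ (2 * n))) \<le> 2 * n * degree phi"
    by (metis degree_power_le degree_smult_le le_trans mult.commute)
  moreover have "degree (\<Sum>j<n. smult (b j) (a j * phi ^ (2 * j))) \<le> 2 * n * degree phi"
  proof (rule degree_sum_le)
    fix j assume "j \<in> {..<n}"
    hence j: "j < n" by simp
    have "degree (smult (b j) (a j * phi ^ (2 * j))) \<le> degree (a j * phi ^ (2 * j))"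
      by (rule degree_smult_le)
    also have "\<dots> \<le> degree (a j) + degree (phi ^ (2*j))" by (rule degree_mult_le)
    also have "\<dots> \<le> degree (a j) + 2 * j * degree phi"
      using degree_power_le[of phi "2*j"] by (simp add: mult.commute)
    also have "\<dots> \<le> 2 * n * degree phi"
    proof -
      have "degree (a j) + 2 * j * degree phi \<le> degree phi + 2 * j * degree phi"
        using assms[OF j] by simp
      also have "\<dots> \<le> 2 * n * degree phi"
      proof -
        have "1 + 2 * j \<le> 2 * n" using j by simp
        hence "(1 + 2 * j) * degree phi \<le> 2 * n * degree phi" by (rule mult_right_mono) simp
        thus ?thesis by (simp add: algebra_simps)
      qed
      finally show ?thesis .
    qed
    finally show "degree (smult (b j) (a j * phi ^ (2 * j))) \<le> 2 * n * degree phi" .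
  qed simp
  ultimately show ?thesis by (meson degree_add_le)
qed

theorem lemma2p3:
  fixes n :: nat and phi :: "int poly" and a :: "nat \<Rightarrow> int poly"
    and an :: int and b :: "nat \<Rightarrow> int"
  assumes "n \<ge> 1"
    and "monic phi"
    and "irreducible_mod TYPE('p::prime_card) phi"
    and "\<And>j. j < n \<Longrightarrow> degree (a j) < degree phi"
    and "\<not> int CARD('p) dvd an"
    and "\<And>j. j < n \<Longrightarrow> int CARD('p) dvd b j"
  shows "\<not> (\<exists>g :: int poly. g dvd
            (smult an (phi ^ (2 * n)) + (\<Sum>j<n. smult (b j) (a j * phi ^ (2 * j))))
          \<and> 0 < degree g \<and> degree g < degree phi)"
proof
  define F where "F = smult an (phi ^ (2 * n)) + (\<Sum>j<n. smult (b j) (a j * phi ^ (2 * j)))"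
  let ?r = "of_int_poly :: int poly \<Rightarrow> 'p mod_ring poly"
  assume "\<exists>g :: int poly. g dvd
            (smult an (phi ^ (2 * n)) + (\<Sum>j<n. smult (b j) (a j * phi ^ (2 * j))))
          \<and> 0 < degree g \<and> degree g < degree phi"
  then obtain g h where F: "F = g * h" and g0: "0 < degree g" and gd: "degree g < degree phi"
    unfolding F_def by (auto elim!: dvdE)
  have irr: "irreducible (?r phi)" using assms(3) unfolding irreducible_mod_def reduce_mod_def .
  have an0: "(of_int an :: 'p mod_ring) \<noteq> 0" using assms(5) of_int_mod_ring_0_iff[where 'a='p] by simp
  have dphi: "degree (?r phi) = degree phi"
    using assms(2) by (intro degree_map_poly) (auto intro!: ccontr[of "phi = 0"])
  have bj0: "\<And>j. j < n \<Longrightarrow> (of_int (b j) :: 'p mod_ring) = 0"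
    using assms(6) of_int_mod_ring_0_iff[where 'a='p] by simp
  have rF: "?r F = smult (of_int an) (?r phi ^ (2 * n))"
  proof -
    have "?r (\<Sum>j<n. smult (b j) (a j * phi ^ (2 * j))) = 0"
      unfolding of_int_poly_hom.hom_sum
      by (rule sum.neutral) (simp add: of_int_hom.map_poly_hom_smult bj0)
    thus ?thesis unfolding F_def of_int_poly_hom.hom_add
      by (simp add: of_int_hom.map_poly_hom_smult of_int_poly_hom.hom_power)
  qed
  have rF0: "?r F \<noteq> 0"
  proof -
    have "?r phi \<noteq> 0" using irr by auto
    thus ?thesis unfolding rF using an0 by simp
  qed
  have rgh: "?r F = ?r g * ?r h" unfolding F of_int_poly_hom.hom_mult ..
  hence rg0: "?r g \<noteq> 0" and rh0: "?r h \<noteq> 0" using rF0 by auto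
  have "degree (?r F) = 2 * n * degree phi"
  proof -
    have "?r phi \<noteq> 0" using irr by auto
    thus ?thesis unfolding rF using an0 dphi by (simp add: degree_power_eq)
  qed
  moreover have "degree (?r F) = degree (?r g) + degree (?r h)"
    unfolding rgh using rg0 rh0 by (rule degree_mult_eq)
  moreover have "degree F \<le> 2 * n * degree phi"
    unfolding F_def using assms(4) by (rule degree_F_le)
  moreover have "F \<noteq> 0" using rF0 by auto
  hence "degree F = degree g + degree h" unfolding F by (auto intro: degree_mult_eq)
  moreover have "degree (?r g) \<le> degree g" "degree (?r h) \<le> degree h"
    by (rule degree_map_poly_le)+
  ultimately have dg: "degree (?r g) = degree g" by linarith
  have "\<not> is_unit (?r g)" using g0 dg by (simp add: is_unit_iff_degree rg0)
  then obtain q where qg: "q dvd ?r g" and pq: "prime q"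
    using prime_divisor_exists[OF rg0] by blast
  have "q dvd ?r F" using qg rgh by simp
  hence "q dvd smult (of_int an) (?r phi ^ (2 * n))" using rF by simp
  hence "q dvd [:of_int an:] * (?r phi ^ (2 * n))" by simp
  moreover have "\<not> q dvd [:of_int an:]"
  proof
    assume "q dvd [:of_int an:]"
    moreover have "is_unit [:(of_int an :: 'p mod_ring):]" using an0 by simp
    ultimately have "is_unit q" using dvd_unit_imp_unit by blast
    thus False using pq not_prime_unit by blast
  qed
  ultimately have "q dvd ?r phi ^ (2 * n)" using pq prime_dvd_mult_iff by blast
  hence "q dvd ?r phi" using pq prime_dvd_power by blast
  then obtain s where s: "?r phi = q * s" by (elim dvdE)
  have "\<not> is_unit q" using pq not_prime_unit by blast
  hence "is_unit s" using irreducibleD[OF irr s] by blast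
  hence "degree s = 0" by (simp add: is_unit_iff_degree)
  moreover have "s \<noteq> 0" "q \<noteq> 0" using s irr by auto
  ultimately have "degree q = degree phi" using s dphi by (simp add: degree_mult_eq)
  moreover have "degree q \<le> degree (?r g)" using qg rg0 by (rule dvd_imp_degree_le)
  ultimately show False using gd dg by simp
qed

end
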